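(* In the setting of the context, with $S(t)=\tilde S e^{(\beta/\gamma)\tilde R}\varphi^{-1}(t)$ for $t\ge0$, we have \[ S(\infty):=\lim_{t\to\infty}S(t)=\tilde S e^{(\beta/\gamma)\tilde R}e^{-(\beta/\gamma)R(\infty)}, \] where $R(\infty):=\lim_{t\to\infty}\bigl(-\frac{\gamma}{\beta}\log\varphi^{-1}(t)\bigr)$, and $S$ is decreasing on $[0,\infty)$ with \[ \tilde S\ge S(t)>\tilde S e^{(\beta/\gamma)\tilde R}e^{-(\beta/\gamma)\alpha}=S(\infty)\quad(t\ge 0). \]
   Context: Let $\beta,\gamma,\delta>0$ be constants and $\tilde S,\tilde E,\tilde I,\tilde R$ real numbers with $N:=\tilde S+\tilde E+\tilde I+\tilde R>0$. Standing assumptions: (A1) $\tilde I>0$; (A2) $\tilde E>(\gamma/\delta)\tilde I$; (A3) $\tilde S>\delta\tilde E/(\beta\tilde I)$; (A4) $\tilde R\ge 0$ and $N>\tilde S e^{(\beta/\gamma)\tilde R}+\tilde R$. Let $\alpha$ be the unique solution in $(\tilde R,N)$ of $x=N-\tilde S e^{(\beta/\gamma)\tilde R}e^{-(\beta/\gamma)x}$, and assume (A5) $\tilde S<(\gamma/\beta)e^{(\beta/\gamma)(\alpha-\tilde R)}$. Put $u_0:=e^{-(\beta/\gamma)\tilde R}$, $u_\infty:=e^{-(\beta/\gamma)\alpha}$. Let $\psi$ be the unique function, continuous and positive on $(u_\infty,u_0]$ and $C^1$ on $(u_\infty,u_0)$, satisfying $\psi'(u)\psi(u)-\frac{\gamma+\delta}{u}\psi(u)=-\delta\,\frac{\beta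 N-\beta\tilde S e^{(\beta/\gamma)\tilde R}u+\gamma\log u}{u}$ on $(u_\infty,u_0)$ and $\psi(u_0)=\beta\tilde I$. Let $\varphi(u):=\int_u^{u_0}\frac{d\xi}{\xi\psi(\xi)}$; $\varphi$ is a strictly decreasing continuous bijection from $(u_\infty,u_0]$ onto $[0,\infty)$, with inverse $\varphi^{-1}:[0,\infty)\to(u_\infty,u_0]$. *)

theory Defs
  imports "HOL-Analysis.Analysis"
begin

definition seir_phi :: "(real \<Rightarrow> real) \<Rightarrow> real \<Rightarrow> real \<Rightarrow> real" where
  "seir_phi \<psi> u0 u = integral {u..u0} (\<lambda>\<xi>. 1 / (\<xi> * \<psi> \<xi>))"

definition seir_phi_inv :: "(real \<Rightarrow> real) \<Rightarrow> real \<Rightarrow> real \<Rightarrow> real \<Rightarrow> real" where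
  "seir_phi_inv \<psi> uinf u0 t = the_inv_into {uinf<..u0} (seir_phi \<psi> u0) t"

end

theory Submission
  imports Defs
begin

theorem theorem8:
  fixes \<beta> \<gamma> \<delta> St Et It Rt N \<alpha> u0 uinf :: real
    and \<psi> \<psi>' :: "real \<Rightarrow> real"
  assumes pos: "\<beta> > 0" "\<gamma> > 0" "\<delta> > 0"
    and N_def: "N = St + Et + It + Rt" and N_pos: "N > 0"
    and A1: "It > 0"
    and A2: "Et > (\<gamma> / \<delta>) * It"
    and A3: "St > \<delta> * Et / (\<beta> * It)"
    and A4: "Rt \<ge> 0" "N > St * exp ((\<beta> / \<gamma>) * Rt) + Rt"
    and alpha_in: "\<alpha> \<in> {Rt<..<N}"
    and alpha_eq: "\<alpha> = N - St * exp ((\<beta> / \<gamma>) * Rt) * exp (- (\<beta> / \<gamma>) * \<alpha>)"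
    and alpha_uniq: "\<And>x. x \<in> {Rt<..<N} \<Longrightarrow>
                       x = N - St * exp ((\<beta> / \<gamma>) * Rt) * exp (- (\<beta> / \<gamma>) * x) \<Longrightarrow> x = \<alpha>"
    and A5: "St < (\<gamma> / \<beta>) * exp ((\<beta> / \<gamma>) * (\<alpha> - Rt))"
    and u0_def: "u0 = exp (- (\<beta> / \<gamma>) * Rt)"
    and uinf_def: "uinf = exp (- (\<beta> / \<gamma>) * \<alpha>)"
    and psi_cont: "continuous_on {uinf<..u0} \<psi>"
    and psi_pos: "\<And>u. u \<in> {uinf<..u0} \<Longrightarrow> \<psi> u > 0"
    and psi_deriv: "\<And>u. u \<in> {uinf<..<u0} \<Longrightarrow> (\<psi> has_real_derivative \<psi>' u) (at u)"
    and psi'_cont: "continuous_on {uinf<..<u0} \<psi>'"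
    and psi_ode: "\<And>u. u \<in> {uinf<..<u0} \<Longrightarrow>
        \<psi>' u * \<psi> u - ((\<gamma> + \<delta>) / u) * \<psi> u
          = - \<delta> * (\<beta> * N - \<beta> * St * exp ((\<beta> / \<gamma>) * Rt) * u + \<gamma> * ln u) / u"
    and psi_init: "\<psi> u0 = \<beta> * It"
    and phi_bij: "bij_betw (seir_phi \<psi> u0) {uinf<..u0} {0..}"
    and phi_decr: "\<And>u v. u \<in> {uinf<..u0} \<Longrightarrow> v \<in> {uinf<..u0} \<Longrightarrow> u < v \<Longrightarrow>
                     seir_phi \<psi> u0 v < seir_phi \<psi> u0 u"
    and phi_cont: "continuous_on {uinf<..u0} (seir_phi \<psi> u0)"
  shows "let S = (\<lambda>t. St * exp ((\<beta> / \<gamma>) * Rt) * seir_phi_inv \<psi> uinf u0 t);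
             R = (\<lambda>t. - (\<gamma> / \<beta>) * ln (seir_phi_inv \<psi> uinf u0 t))
         in (\<exists>Rinf Sinf.
               (R \<longlongrightarrow> Rinf) at_top \<and> (S \<longlongrightarrow> Sinf) at_top
             \<and> Sinf = St * exp ((\<beta> / \<gamma>) * Rt) * exp (- (\<beta> / \<gamma>) * Rinf)
             \<and> (\<forall>s t. 0 \<le> s \<longrightarrow> s < t \<longrightarrow> S t < S s)
             \<and> (\<forall>t\<ge>0. St \<ge> S t \<and> S t > St * exp ((\<beta> / \<gamma>) * Rt) * exp (- (\<beta> / \<gamma>) * \<alpha>))
             \<and> St * exp ((\<beta> / \<gamma>) * Rt) * exp (- (\<beta> / \<gamma>) * \<alpha>) = Sinf)"
proof -
  define f where "f = seir_phi \<psi> u0"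
  define g where "g = seir_phi_inv \<psi> uinf u0"
  define c where "c = St * exp ((\<beta> / \<gamma>) * Rt)"
  have Etpos: "Et > 0" using A2 A1 pos by (smt (verit) divide_pos_pos mult_pos_pos)
  have Stpos: "St > 0" using A3 Etpos A1 pos
    by (smt (verit) divide_pos_pos mult_pos_pos)
  have cpos: "c > 0" unfolding c_def using Stpos by simp
  have cu0: "c * u0 = St" unfolding c_def u0_def
    by (simp add: mult.assoc flip: exp_add)
  have cuinf: "c * uinf = St * exp ((\<beta> / \<gamma>) * Rt) * exp (- (\<beta> / \<gamma>) * \<alpha>)"
    unfolding c_def uinf_def by simp
  have uinfpos: "uinf > 0" unfolding uinf_def by simp
  have bij: "bij_betw f {uinf<..u0} {0..}" using phi_bij f_def by simp
  have gdef: "g t = the_inv_into {uinf<..u0} f t" for t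
    unfolding g_def f_def seir_phi_inv_def by simp
  have gin: "g t \<in> {uinf<..u0}" if "t \<ge> 0" for t
  proof -
    have "bij_betw (the_inv_into {uinf<..u0} f) {0..} {uinf<..u0}"
      using bij by (rule bij_betw_the_inv_into)
    then show ?thesis using that gdef by (auto dest: bij_betwE)
  qed
  have fg: "f (g t) = t" if "t \<ge> 0" for t
    using f_the_inv_into_f_bij_betw[OF bij] that gdef by simp
  have fdec: "\<And>u v. u \<in> {uinf<..u0} \<Longrightarrow> v \<in> {uinf<..u0} \<Longrightarrow> u < v \<Longrightarrow> f v < f u"
    using phi_decr f_def by simp
  have gdec: "g t < g s" if "0 \<le> s" "s < t" for s t
  proof (rule ccontr)
    assume "\<not> g t < g s"
    then have "g s < g t \<or> g s = g t" by auto
    then show False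
    proof
      assume "g s < g t"
      then have "f (g t) < f (g s)" using fdec gin that by simp
      then show False using fg that by simp
    next
      assume "g s = g t" then have "f (g s) = f (g t)" by simp
      then show False using fg that by simp
    qed
  qed
  have glim: "(g \<longlongrightarrow> uinf) at_top"
  proof (rule order_tendstoI)
    fix a assume "a < uinf"
    show "eventually (\<lambda>t. a < g t) at_top"
      using eventually_ge_at_top[of 0]
      by eventually_elim (use gin \<open>a < uinf\<close> in fastforce)
  next
    fix a assume a: "uinf < a"
    show "eventually (\<lambda>t. g t < a) at_top"
    proof (cases "a \<le> u0")
      case False
      show ?thesis using eventually_ge_at_top[of 0]
        by eventually_elim (use gin False in fastforce)
    next
      case True
      have ain: "a \<in> {uinf<..u0}" using a True by simp
      show ?thesis using eventually_ge_at_top[of 0] eventually_gt_at_top[of "f a"]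
      proof eventually_elim
        case (elim t)
        show ?case
        proof (rule ccontr)
          assume "\<not> g t < a"
          then have "a < g t \<or> a = g t" by auto
          then show False
          proof
            assume "a < g t"
            then have "f (g t) < f a" using fdec gin ain elim by simp
            then show False using fg elim by simp
          next
            assume "a = g t" then show False using fg elim by simp
          qed
        qed
      qed
    qed
  qed
  have Rlim: "((\<lambda>t. - (\<gamma> / \<beta>) * ln (g t)) \<longlongrightarrow> - (\<gamma> / \<beta>) * ln uinf) at_top"
    by (intro tendsto_intros glim) (use uinfpos in simp)
  have Rinf: "- (\<gamma> / \<beta>) * ln uinf = \<alpha>" unfolding uinf_def using pos by simp
  have Slim: "((\<lambda>t. c * g t) \<longlongrightarrow> c * uinf) at_top"
    by (intro tendsto_intros glim)
  show ?thesis
    unfolding Let_def g_def[symmetric] c_def[symmetric]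
  proof (intro exI conjI allI impI)
    show "((\<lambda>t. - (\<gamma> / \<beta>) * ln (g t)) \<longlongrightarrow> \<alpha>) at_top" using Rlim Rinf by simp
    show "((\<lambda>t. c * g t) \<longlongrightarrow> c * uinf) at_top" by (rule Slim)
    show "c * uinf = c * exp (- (\<beta> / \<gamma>) * \<alpha>)" using uinf_def by simp
    show "c * g t < c * g s" if "0 \<le> s" "s < t" for s t using gdec[OF that] cpos by simp
    fix t :: real assume t: "0 \<le> t"
    show "c * g t \<le> St" using gin[OF t] cpos cu0 by (metis greaterThanAtMost_iff mult_left_mono less_imp_le)
    show "c * exp (- (\<beta> / \<gamma>) * \<alpha>) < c * g t" using gin[OF t] cpos uinf_def by simp
  next
    show "c * exp (- (\<beta> / \<gamma>) * \<alpha>) = c * uinf" using uinf_def by simp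
  qed
qed

end
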